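(* Let $a_1,\dots,a_{12}$ be positive real numbers that can be partitioned into four triples such that each triple consists of the side lengths of a non-degenerate triangle. Then $a_1,\dots,a_{12}$ can be partitioned into three quadruples such that each quadruple consists of the side lengths of a non-degenerate (planar) quadrilateral.
   Context: Three positive reals are the side lengths of a non-degenerate triangle iff the largest is strictly less than the sum of the other two. Four positive reals are the side lengths of a non-degenerate quadrilateral iff the largest is strictly less than the sum of the other three. *)

theory Defs
  imports Complex_Main "HOL-Library.Disjoint_Sets"
begin

text \<open>A finite family of positive reals, indexed by a finite index set S, forms the side
lengths of a non-degenerate polygon (triangle for card S = 3, quadrilateral for card S = 4)
iff the largest side is strictly less than the sum of the others, i.e. every side is
strictly less than the sum of the remaining ones.\<close>
definition polygon_sides :: "(nat \<Rightarrow> real) \<Rightarrow> nat set \<Rightarrow> bool" where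
  "polygon_sides a S \<longleftrightarrow> (\<forall>i\<in>S. a i < (\<Sum>j\<in>S - {i}. a j))"

definition triangle_sides :: "(nat \<Rightarrow> real) \<Rightarrow> nat set \<Rightarrow> bool" where
  "triangle_sides a S \<longleftrightarrow> card S = 3 \<and> polygon_sides a S"

definition quadrilateral_sides :: "(nat \<Rightarrow> real) \<Rightarrow> nat set \<Rightarrow> bool" where
  "quadrilateral_sides a S \<longleftrightarrow> card S = 4 \<and> polygon_sides a S"

end

theory Submission
  imports Defs
begin

lemma quad_from_tri:
  assumes T: "triangle_sides a T" and e: "e \<notin> T" and m: "m \<in> T" "a e \<le> a m"
    and pos: "\<forall>i\<in>insert e T. a i > 0"
  shows "quadrilateral_sides a (insert e T)"
proof -
  have c3: "card T = 3" and pT: "\<forall>i\<in>T. a i < (\<Sum>j\<in>T - {i}. a j)"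
    using T unfolding triangle_sides_def polygon_sides_def by auto
  have fin: "finite T" using c3 by (metis card.infinite zero_neq_numeral)
  have c4: "card (insert e T) = 4" using c3 e fin by simp
  have "a i < (\<Sum>j\<in>insert e T - {i}. a j)" if i: "i \<in> insert e T" for i
  proof (cases "i = e")
    case True
    have "(\<Sum>j\<in>insert e T - {i}. a j) = (\<Sum>j\<in>T. a j)" using True e by simp
    also have "\<dots> = a m + (\<Sum>j\<in>T - {m}. a j)" using fin m(1) by (simp add: sum.remove)
    finally show ?thesis using pT m pos True by fastforce
  next
    case False
    then have iT: "i \<in> T" using i by simp
    have "(\<Sum>j\<in>insert e T - {i}. a j) = a e + (\<Sum>j\<in>T - {i}. a j)"
      using False e fin by (simp add: insert_Diff_if)
    then show ?thesis using pT iT pos by fastforce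
  qed
  then show ?thesis unfolding quadrilateral_sides_def polygon_sides_def using c4 by blast
qed

theorem mainTheorem1:
  fixes a :: "nat \<Rightarrow> real"
  assumes pos: "\<forall>i\<in>{1..12}. a i > 0"
    and tri: "\<exists>P. partition_on {1..12::nat} P \<and> card P = 4 \<and> (\<forall>T\<in>P. triangle_sides a T)"
  shows "\<exists>Q. partition_on {1..12::nat} Q \<and> card Q = 3 \<and> (\<forall>U\<in>Q. quadrilateral_sides a U)"
proof -
  obtain P where part: "partition_on {1..12::nat} P" and cP: "card P = 4"
    and tP: "\<forall>T\<in>P. triangle_sides a T" using tri by blast
  have finP: "finite P" using cP by (metis card.infinite zero_neq_numeral)
  have Pne: "P \<noteq> {}" using cP by auto
  define M where "M T = Max (a ` T)" for T
  have finT: "finite T" "T \<noteq> {}" if "T \<in> P" for T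
    using tP that unfolding triangle_sides_def by (auto, metis card.infinite zero_neq_numeral)
  obtain T0 where T0: "T0 \<in> P" "M T0 = Min (M ` P)"
  proof -
    have "Min (M ` P) \<in> M ` P" using Min_in[of "M ` P"] finP Pne by auto
    then show ?thesis using that by auto
  qed
  have small: "\<exists>m\<in>T. a e \<le> a m" if "T \<in> P" "e \<in> T0" for T e
  proof -
    have h1: "a e \<le> M T0" unfolding M_def using finT[OF T0(1)] that(2) by simp
    have h2: "M T0 \<le> M T" using T0 finP that(1) by simp
    have "M T \<in> a ` T" unfolding M_def using Max_in[of "a ` T"] finT[OF that(1)] by auto
    then obtain m where "m \<in> T" "M T = a m" by auto
    moreover have "a e \<le> a m" using h1 h2 \<open>M T = a m\<close> by linarith
    ultimately show ?thesis by blast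
  qed
  have c3P: "card (P - {T0}) = 3" using cP T0(1) finP by simp
  obtain A B C where ABC: "P - {T0} = {A,B,C}" "A \<noteq> B" "B \<noteq> C" "A \<noteq> C"
    using card_3_iff[THEN iffD1, OF c3P] by (elim exE conjE) (rule that; assumption)
  have c3T: "card T0 = 3" using tP T0(1) unfolding triangle_sides_def by auto
  obtain p q r where pqr: "T0 = {p,q,r}" "p \<noteq> q" "q \<noteq> r" "p \<noteq> r"
    using card_3_iff[THEN iffD1, OF c3T] by (elim exE conjE) (rule that; assumption)
  have Pe: "P = {T0, A, B, C}" using ABC(1) T0(1) by auto
  have U: "\<Union>P = {1..12}" and D: "disjoint P" and E: "{} \<notin> P"
    using part unfolding partition_on_def by auto
  have dj: "X \<inter> Y = {}" if "X \<in> P" "Y \<in> P" "X \<noteq> Y" for X Y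
    using D that unfolding pairwise_def disjnt_def by blast
  have inP: "A \<in> P" "B \<in> P" "C \<in> P" using Pe by auto
  have neq: "T0 \<noteq> A" "T0 \<noteq> B" "T0 \<noteq> C" using ABC(1) by auto
  have dAB: "A \<inter> B = {}" "A \<inter> C = {}" "B \<inter> C = {}" "T0 \<inter> A = {}" "T0 \<inter> B = {}" "T0 \<inter> C = {}"
    using dj[OF inP(1) inP(2) ABC(2)] dj[OF inP(1) inP(3) ABC(4)] dj[OF inP(2) inP(3) ABC(3)]
      dj[OF T0(1) inP(1) neq(1)] dj[OF T0(1) inP(2) neq(2)] dj[OF T0(1) inP(3) neq(3)] by auto
  have neA: "A \<noteq> {}" "B \<noteq> {}" "C \<noteq> {}" using E inP by auto
  define Q where "Q = {insert p A, insert q B, insert r C}"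
  have posT: "\<forall>i\<in>insert e T. a i > 0" if "T \<in> P" "e \<in> T0" for T e
  proof -
    have "insert e T \<subseteq> \<Union>P" using that T0(1) by blast
    then show ?thesis using pos U by blast
  qed
  have pA: "p \<notin> A" "p \<notin> B" "p \<notin> C" "q \<notin> A" "q \<notin> B" "q \<notin> C"
     "r \<notin> A" "r \<notin> B" "r \<notin> C"
    using dAB(4,5,6) unfolding pqr(1) by auto
  have eT: "p \<in> T0" "q \<in> T0" "r \<in> T0" using pqr(1) by auto
  have qgen: "quadrilateral_sides a (insert e X)" if hx: "X \<in> P" "e \<in> T0" "e \<notin> X" for X e
  proof -
    obtain m where "m \<in> X" "a e \<le> a m" using small[OF hx(1,2)] by blast
    then show ?thesis using quad_from_tri[of a X e m] tP hx posT[OF hx(1,2)] by blast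
  qed
  have qA: "quadrilateral_sides a (insert p A)" using qgen[OF inP(1) eT(1) pA(1)] .
  have qB: "quadrilateral_sides a (insert q B)" using qgen[OF inP(2) eT(2) pA(5)] .
  have qC: "quadrilateral_sides a (insert r C)" using qgen[OF inP(3) eT(3) pA(9)] .
  have dgen: "insert x X \<noteq> insert y Y" if hd: "X \<noteq> {}" "X \<inter> Y = {}" "y \<notin> X" for x y X Y
  proof
    assume eq: "insert x X = insert y Y"
    obtain z where z: "z \<in> X" using hd(1) by blast
    then have "z \<in> insert y Y" using eq by blast
    then show False using hd(2,3) z by blast
  qed
  have d1: "insert p A \<noteq> insert q B" by (rule dgen[OF neA(1) dAB(1) pA(4)])
  have d2: "insert p A \<noteq> insert r C" by (rule dgen[OF neA(1) dAB(2) pA(7)])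
  have d3: "insert q B \<noteq> insert r C" by (rule dgen[OF neA(2) dAB(3) pA(8)])
  have cQ: "card Q = 3" unfolding Q_def using d1 d2 d3 by simp
  have "\<Union>Q = \<Union>P" unfolding Q_def Pe pqr(1) by auto
  then have UQ: "\<Union>Q = {1..12}" using U by simp
  have i1: "insert p A \<inter> insert q B = {}" using pqr(2) pA(1,2,4) dAB(1) by blast
  have i2: "insert p A \<inter> insert r C = {}" using pqr(4) pA(1,3,7) dAB(2) by blast
  have i3: "insert q B \<inter> insert r C = {}" using pqr(3) pA(5,6,8) dAB(3) by blast
  have DQ: "disjoint Q" unfolding Q_def pairwise_def disjnt_def using i1 i2 i3
    by (simp add: Int_commute)
  have EQ: "{} \<notin> Q" unfolding Q_def by auto
  have "partition_on {1..12} Q" unfolding partition_on_def using UQ DQ EQ by blast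
  then show ?thesis using cQ qA qB qC unfolding Q_def by blast
qed

end
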